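(* Let $A$ be a finite set. The $\Sigma_A$-spaces $|(R^+(A),\supseteq)|$ and $\mathrm{OConf}(A,\mathbb R^2)=\{f:A\to\mathbb R^2\mid f\text{ injective}\}$ are $\Sigma_A$-homotopy equivalent.
   Context: A strict partial order is a transitive irreflexive relation; it is semi-linear if it is induced by a surjection $h:A\to\{1,\dots,l\}$ (i.e. $a<b$ iff $h(a)<h(b)$). $<_1\bar\cup<_2$ denotes the transitive closure of the union. A double order on $A$ is a pair $(\overset{x}{<},\overset{y}{<})$ of strict partial orders such that any two distinct elements are comparable by $\overset{x}{<}$ or by $\overset{y}{<}$; regular if $\overset{x}{<}$ is semi-linear and $a\overset{x}{<}b$ implies $a,b$ are not $\overset{y}{<}$-comparable; semi-regular if it is the componentwise $\bar\cup$ of finitely many regular double orders. $R^+(A)$ is the set of semi-regular double orders, ordered by $\overset{*}{<}_1\supseteq\overset{*}{<}_2$ iff $\overset{x}{<}_1\supseteq\overset{x}{<}_2$ and $\overset{y}{<}_1\supseteq\overset{y}{<}_2$; $|P|$ is the realization of the nerve of a poset. $\Sigma_A$ acts on $\mathrm{OConf}(A,\mathbb R^2)$ by precomposition and on double orders by $(\overset{x}{<},\overset{y}{<})\sigma=(\overset{x}{<}\sigma,\overset{y}{<}\sigma)$, $a(\overset{x}{<}\sigma)b$ iff $\sigma(a)\overset{x}{<}\sigma(b)$ (similarly for $y$). *)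

theory Defs
  imports "HOL-Analysis.Analysis" "HOL-Combinatorics.Permutations"
begin

type_synonym 'a dorder = "('a \<times> 'a) set \<times> ('a \<times> 'a) set"

definition strict_po :: "'a set \<Rightarrow> ('a \<times> 'a) set \<Rightarrow> bool" where
  "strict_po A r \<longleftrightarrow> r \<subseteq> A \<times> A \<and> trans r \<and> (\<forall>a. (a, a) \<notin> r)"

definition semi_linear :: "'a set \<Rightarrow> ('a \<times> 'a) set \<Rightarrow> bool" where
  "semi_linear A r \<longleftrightarrow>
     (\<exists>(l::nat) h. h ` A = {1..l} \<and> r = {(a, b). a \<in> A \<and> b \<in> A \<and> h a < h b})"

definition double_order :: "'a set \<Rightarrow> 'a dorder \<Rightarrow> bool" where
  "double_order A D \<longleftrightarrow> strict_po A (fst D) \<and> strict_po A (snd D) \<and>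
     (\<forall>a\<in>A. \<forall>b\<in>A. a \<noteq> b \<longrightarrow>
        (a, b) \<in> fst D \<or> (b, a) \<in> fst D \<or> (a, b) \<in> snd D \<or> (b, a) \<in> snd D)"

definition regular_dorder :: "'a set \<Rightarrow> 'a dorder \<Rightarrow> bool" where
  "regular_dorder A D \<longleftrightarrow> double_order A D \<and> semi_linear A (fst D) \<and>
     (\<forall>a b. (a, b) \<in> fst D \<longrightarrow> (a, b) \<notin> snd D \<and> (b, a) \<notin> snd D)"

definition semi_regular :: "'a set \<Rightarrow> 'a dorder \<Rightarrow> bool" where
  "semi_regular A D \<longleftrightarrow> double_order A D \<and>
     (\<exists>F. finite F \<and> (\<forall>E\<in>F. regular_dorder A E) \<and>
          D = ((\<Union>E\<in>F. fst E)\<^sup>+, (\<Union>E\<in>F. snd E)\<^sup>+))"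

definition R_plus :: "'a set \<Rightarrow> 'a dorder set" where
  "R_plus A = {D. semi_regular A D}"

definition dorder_le :: "'a dorder \<Rightarrow> 'a dorder \<Rightarrow> bool" where
  "dorder_le D1 D2 \<longleftrightarrow> fst D2 \<subseteq> fst D1 \<and> snd D2 \<subseteq> snd D1"

text \<open>Geometric realization of the nerve (order complex) of a finite poset (P, le):
  the points are convex combinations of vertices whose support is a chain;
  topology = subspace of the product topology on 'b \<Rightarrow> real.\<close>
definition realization :: "'b set \<Rightarrow> ('b \<Rightarrow> 'b \<Rightarrow> bool) \<Rightarrow> ('b \<Rightarrow> real) set" where
  "realization P le = {t. (\<forall>x. 0 \<le> t x) \<and> (\<forall>x. x \<notin> P \<longrightarrow> t x = 0) \<and> sum t P = 1 \<and>
      (\<forall>x y. 0 < t x \<and> 0 < t y \<longrightarrow> le x y \<or> le y x)}"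

definition OConf :: "'a set \<Rightarrow> ('a \<Rightarrow> real^2) set" where
  "OConf A = {f. inj_on f A \<and> (\<forall>x. x \<notin> A \<longrightarrow> f x = 0)}"

definition rel_act :: "('a \<times> 'a) set \<Rightarrow> ('a \<Rightarrow> 'a) \<Rightarrow> ('a \<times> 'a) set" where
  "rel_act r \<sigma> = {(a, b). (\<sigma> a, \<sigma> b) \<in> r}"

definition dorder_act :: "'a dorder \<Rightarrow> ('a \<Rightarrow> 'a) \<Rightarrow> 'a dorder" where
  "dorder_act D \<sigma> = (rel_act (fst D) \<sigma>, rel_act (snd D) \<sigma>)"

text \<open>Induced action on the realization: the vertex D is sent to D\<sigma>.\<close>
definition realization_act :: "('a dorder \<Rightarrow> real) \<Rightarrow> ('a \<Rightarrow> 'a) \<Rightarrow> ('a dorder \<Rightarrow> real)" where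
  "realization_act t \<sigma> = (\<lambda>E. t (dorder_act E (inv \<sigma>)))"

definition conf_act :: "('a \<Rightarrow> real^2) \<Rightarrow> ('a \<Rightarrow> 'a) \<Rightarrow> ('a \<Rightarrow> real^2)" where
  "conf_act f \<sigma> = f \<circ> \<sigma>"

definition equivariant ::
  "'g set \<Rightarrow> ('x \<Rightarrow> 'g \<Rightarrow> 'x) \<Rightarrow> ('y \<Rightarrow> 'g \<Rightarrow> 'y) \<Rightarrow> 'x topology \<Rightarrow> ('x \<Rightarrow> 'y) \<Rightarrow> bool" where
  "equivariant G actX actY X f \<longleftrightarrow>
     (\<forall>\<sigma>\<in>G. \<forall>x\<in>topspace X. f (actX x \<sigma>) = actY (f x) \<sigma>)"

definition G_homotopy_equivalent ::
  "'g set \<Rightarrow> ('x \<Rightarrow> 'g \<Rightarrow> 'x) \<Rightarrow> ('y \<Rightarrow> 'g \<Rightarrow> 'y) \<Rightarrow> 'x topology \<Rightarrow> 'y topology \<Rightarrow> bool" where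
  "G_homotopy_equivalent G actX actY X Y \<longleftrightarrow>
     (\<exists>f g. continuous_map X Y f \<and> continuous_map Y X g \<and>
        equivariant G actX actY X f \<and> equivariant G actY actX Y g \<and>
        homotopic_with (equivariant G actX actX X) X X (g \<circ> f) id \<and>
        homotopic_with (equivariant G actY actY Y) Y Y (f \<circ> g) id)"

end

theory Submission
  imports Defs
begin


lemma line_homotopy:
  fixes p q :: "'x::topological_space \<Rightarrow> 'i \<Rightarrow> 'v::real_normed_vector"
  assumes cp: "continuous_on S p" and cq: "continuous_on S q"
    and inT: "\<And>x s. x \<in> S \<Longrightarrow> s \<in> {0..1} \<Longrightarrow> (\<lambda>i. (1 - s) *\<^sub>R p x i + s *\<^sub>R q x i) \<in> T"
    and Pr: "\<And>s. s \<in> {0..1} \<Longrightarrow> Pr (\<lambda>x. \<lambda>i. (1 - s) *\<^sub>R p x i + s *\<^sub>R q x i)"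
  shows "homotopic_with Pr (top_of_set S) (top_of_set T) p q"
  unfolding homotopic_with_def
proof (intro exI conjI allI ballI)
  let ?h = "\<lambda>z::real \<times> 'x. \<lambda>i. (1 - fst z) *\<^sub>R p (snd z) i + fst z *\<^sub>R q (snd z) i"
  have "continuous_on ({0..1} \<times> S) ?h"
  proof (intro continuous_on_coordinatewise_then_product continuous_intros)
    fix i
    show "continuous_on ({0..1} \<times> S) (\<lambda>x. p (snd x) i)"
      by (rule continuous_on_compose2[of S "\<lambda>c. p c i"])
         (auto intro: continuous_on_product_then_coordinatewise[OF cp] continuous_intros)
    show "continuous_on ({0..1} \<times> S) (\<lambda>x. q (snd x) i)"
      by (rule continuous_on_compose2[of S "\<lambda>c. q c i"])
         (auto intro: continuous_on_product_then_coordinatewise[OF cq] continuous_intros)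
  qed
  then show "continuous_map (prod_topology (top_of_set {0..1}) (top_of_set S)) (top_of_set T) ?h"
    using inT by auto
  show "?h (0, x) = p x" for x by auto
  show "?h (1, x) = q x" for x by auto
  show "Pr (\<lambda>x. ?h (s, x))" if "s \<in> {0..1}" for s
    using Pr[OF that] by simp
qed

lemma continuous_on_Min_fam:
  fixes f :: "'i \<Rightarrow> 'x::topological_space \<Rightarrow> real"
  assumes "finite I" "I \<noteq> {}" "\<And>i. i \<in> I \<Longrightarrow> continuous_on S (f i)"
  shows "continuous_on S (\<lambda>x. Min ((\<lambda>i. f i x) ` I))"
  using assms
proof (induction I rule: finite_ne_induct)
  case (singleton i) then show ?case by simp
next
  case (insert i I)
  have "continuous_on S (\<lambda>x. min (f i x) (Min ((\<lambda>i. f i x) ` I)))"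
    using insert by (intro continuous_on_min) auto
  moreover have "min (f i x) (Min ((\<lambda>i. f i x) ` I)) = Min ((\<lambda>i. f i x) ` insert i I)" for x
    using insert by (simp add: Min_insert)
  ultimately show ?case by simp
qed

lemma continuous_on_Max_fam:
  fixes f :: "'i \<Rightarrow> 'x::topological_space \<Rightarrow> real"
  assumes "finite I" "I \<noteq> {}" "\<And>i. i \<in> I \<Longrightarrow> continuous_on S (f i)"
  shows "continuous_on S (\<lambda>x. Max ((\<lambda>i. f i x) ` I))"
  using assms
proof (induction I rule: finite_ne_induct)
  case (singleton i) then show ?case by simp
next
  case (insert i I)
  have "continuous_on S (\<lambda>x. max (f i x) (Max ((\<lambda>i. f i x) ` I)))"
    using insert by (intro continuous_on_max) auto
  moreover have "max (f i x) (Max ((\<lambda>i. f i x) ` I)) = Max ((\<lambda>i. f i x) ` insert i I)" for x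
    using insert by (simp add: Max_insert)
  ultimately show ?case by simp
qed

lemma finite_chain_least:
  fixes K :: "'a dorder set"
  assumes "finite K" "K \<noteq> {}"
    and "\<And>D E. D \<in> K \<Longrightarrow> E \<in> K \<Longrightarrow> dorder_le D E \<or> dorder_le E D"
  shows "\<exists>M\<in>K. \<forall>D\<in>K. fst M \<subseteq> fst D \<and> snd M \<subseteq> snd D"
  using assms
proof (induction K rule: finite_ne_induct)
  case (singleton x) then show ?case by auto
next
  case (insert x F)
  then obtain M where M: "M \<in> F" "\<forall>D\<in>F. fst M \<subseteq> fst D \<and> snd M \<subseteq> snd D" by auto
  have "dorder_le x M \<or> dorder_le M x" using insert M by auto
  then show ?case
  proof
    assume "dorder_le x M" then show ?thesis using M by (auto simp: dorder_le_def)
  next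
    assume "dorder_le M x" then show ?thesis using M by (force simp: dorder_le_def)
  qed
qed



definition gx :: "('a \<Rightarrow> real^2) \<Rightarrow> 'a \<Rightarrow> 'a \<Rightarrow> real" where
  "gx c a b = c b $ 1 - c a $ 1"
definition gy :: "('a \<Rightarrow> real^2) \<Rightarrow> 'a \<Rightarrow> 'a \<Rightarrow> real" where
  "gy c a b = c b $ 2 - c a $ 2"

definition rz :: "'a dorder \<Rightarrow> ('a \<Rightarrow> real^2) \<Rightarrow> real \<Rightarrow> bool" where
  "rz D c e \<longleftrightarrow> (\<forall>(a,b)\<in>fst D. e < gx c a b) \<and> (\<forall>(a,b)\<in>snd D. e < gy c a b)"

definition mg :: "'a dorder \<Rightarrow> ('a \<Rightarrow> real^2) \<Rightarrow> real" where
  "mg D c = Min (insert 1 ((\<lambda>(a,b). gx c a b) ` fst D \<union> (\<lambda>(a,b). gy c a b) ` snd D))"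

definition fin_do :: "'a dorder \<Rightarrow> bool" where
  "fin_do D \<longleftrightarrow> finite (fst D) \<and> finite (snd D)"

lemma mg_gt: "fin_do D \<Longrightarrow> e < 1 \<Longrightarrow> e < mg D c \<longleftrightarrow> rz D c e"
  unfolding mg_def rz_def fin_do_def by (subst Min_gr_iff) auto

lemma mg_le1: "fin_do D \<Longrightarrow> mg D c \<le> 1"
  unfolding mg_def fin_do_def by (rule Min_le) auto

lemma mg_mono:
  assumes "fin_do D'" "fst D \<subseteq> fst D'" "snd D \<subseteq> snd D'"
  shows "mg D' c \<le> mg D c"
  unfolding mg_def using assms unfolding fin_do_def
  by (intro Min_antimono) (auto intro: finite_subset)

lemma mg_ge:
  assumes "fin_do D" "\<And>a b. (a,b) \<in> fst D \<Longrightarrow> k \<le> gx c a b" "\<And>a b. (a,b) \<in> snd D \<Longrightarrow> k \<le> gy c a b" "k \<le> 1"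
  shows "k \<le> mg D c"
  unfolding mg_def using assms unfolding fin_do_def
  by (subst Min_ge_iff) auto

lemma gx_cont: "continuous_on S (\<lambda>c::'a \<Rightarrow> real^2. gx c a b)"
  unfolding gx_def
  by (intro continuous_intros continuous_on_compose2[OF continuous_on_component continuous_on_product_then_coordinatewise[OF continuous_on_id]]) auto

lemma gy_cont: "continuous_on S (\<lambda>c::'a \<Rightarrow> real^2. gy c a b)"
  unfolding gy_def
  by (intro continuous_intros continuous_on_compose2[OF continuous_on_component continuous_on_product_then_coordinatewise[OF continuous_on_id]]) auto

lemma mg_cont:
  fixes D :: "'a dorder"
  assumes "fin_do D"
  shows "continuous_on S (mg D)"
proof -
  define F :: "(('a\<times>'a) + ('a\<times>'a)) option \<Rightarrow> ('a \<Rightarrow> real^2) \<Rightarrow> real"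
    where "F = (\<lambda>i c. case i of None \<Rightarrow> (1::real)
      | Some (Inl (a,b)) \<Rightarrow> gx c a b | Some (Inr (a,b)) \<Rightarrow> gy c a b)"
  define I where "I = insert None (Some ` (Inl ` fst D \<union> Inr ` snd D))"
  have eq: "mg D c = Min ((\<lambda>i. F i c) ` I)" for c
    unfolding mg_def F_def I_def by (simp add: image_Un image_image)
  have "continuous_on S (\<lambda>c. Min ((\<lambda>i. F i c) ` I))"
  proof (rule continuous_on_Min_fam)
    show "finite I" using assms by (simp add: I_def fin_do_def)
    show "I \<noteq> {}" by (simp add: I_def)
    fix i :: "(('a\<times>'a) + ('a\<times>'a)) option"
    consider "i = None" | a b where "i = Some (Inl (a,b))" | a b where "i = Some (Inr (a,b))"
      by (metis (no_types) old.prod.exhaust option.exhaust sum.exhaust)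
    then show "continuous_on S (F i)"
      by cases (auto simp: F_def gx_cont gy_cont)
  qed
  moreover have "mg D = (\<lambda>c. Min ((\<lambda>i. F i c) ` I))" using eq by (rule ext)
  ultimately show ?thesis by simp
qed

lemma gx_add: "gx c a b + gx c b d = gx c a d" by (simp add: gx_def)
lemma gy_add: "gy c a b + gy c b d = gy c a d" by (simp add: gy_def)

lemma trancl_gx:
  assumes "0 \<le> e" "\<And>a b. (a,b) \<in> r \<Longrightarrow> e < gx c a b" "(a,b) \<in> r\<^sup>+"
  shows "e < gx c a b"
  using assms(3)
proof (induction rule: trancl_induct)
  case (base y) then show ?case using assms(2) by auto
next
  case (step y z)
  then show ?case using assms(1) assms(2)[of y z] gx_add[of c a y z] by force
qed

lemma trancl_gy:
  assumes "0 \<le> e" "\<And>a b. (a,b) \<in> r \<Longrightarrow> e < gy c a b" "(a,b) \<in> r\<^sup>+"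
  shows "e < gy c a b"
  using assms(3)
proof (induction rule: trancl_induct)
  case (base y) then show ?case using assms(2) by auto
next
  case (step y z)
  then show ?case using assms(1) assms(2)[of y z] gy_add[of c a y z] by force
qed

definition join :: "'a dorder set \<Rightarrow> 'a dorder" where
  "join S = ((\<Union>E\<in>S. fst E)\<^sup>+, (\<Union>E\<in>S. snd E)\<^sup>+)"

lemma rz_join:
  assumes "0 \<le> e" "\<And>E. E \<in> S \<Longrightarrow> rz E c e"
  shows "rz (join S) c e"
proof -
  have 1: "e < gx c a b" if h: "(a,b) \<in> (\<Union>E\<in>S. fst E)" for a b
  proof -
    obtain E where "E \<in> S" "(a,b) \<in> fst E" using h by blast
    then show ?thesis using assms(2)[of E] unfolding rz_def by blast
  qed
  have 2: "e < gy c a b" if h: "(a,b) \<in> (\<Union>E\<in>S. snd E)" for a b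
  proof -
    obtain E where "E \<in> S" "(a,b) \<in> snd E" using h by blast
    then show ?thesis using assms(2)[of E] unfolding rz_def by blast
  qed
  show ?thesis unfolding rz_def join_def fst_conv snd_conv
    using trancl_gx[OF assms(1) 1] trancl_gy[OF assms(1) 2] by blast
qed

lemma join_mono: "S \<subseteq> S' \<Longrightarrow> fst (join S) \<subseteq> fst (join S') \<and> snd (join S) \<subseteq> snd (join S')"
  unfolding join_def by (auto intro!: trancl_mono_subset)

lemma join_sub:
  assumes "E \<in> S" shows "fst E \<subseteq> fst (join S) \<and> snd E \<subseteq> snd (join S)"
  using assms unfolding join_def by auto

abbreviation Reg :: "'a set \<Rightarrow> 'a dorder set" where
  "Reg A \<equiv> {E. regular_dorder A E}"

lemma double_order_sub: "double_order A D \<Longrightarrow> fst D \<subseteq> A \<times> A \<and> snd D \<subseteq> A \<times> A"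
  by (simp add: double_order_def strict_po_def)

lemma double_order_fin: "finite A \<Longrightarrow> double_order A D \<Longrightarrow> fin_do D"
proof -
  assume "finite A" "double_order A D"
  then show ?thesis unfolding fin_do_def using double_order_sub[of A D]
    by (metis finite_SigmaI finite_subset)
qed

lemma R_plus_double: "D \<in> R_plus A \<Longrightarrow> double_order A D"
  by (simp add: R_plus_def semi_regular_def)

lemma Reg_double: "D \<in> Reg A \<Longrightarrow> double_order A D"
  by (simp add: regular_dorder_def)

lemma finite_dorders: "finite A \<Longrightarrow> finite {D. double_order A D}"
proof -
  assume fA: "finite A"
  have "{D. double_order A D} \<subseteq> Pow (A \<times> A) \<times> Pow (A \<times> A)"
    using double_order_sub by force
  then show ?thesis by (rule finite_subset) (simp add: fA)
qed

lemma finite_R_plus: "finite A \<Longrightarrow> finite (R_plus A)"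
  by (rule finite_subset[OF _ finite_dorders]) (auto dest: R_plus_double)

lemma finite_Reg: "finite A \<Longrightarrow> finite (Reg A)"
proof -
  assume fA: "finite A"
  show ?thesis by (rule finite_subset[OF _ finite_dorders[OF fA]]) (auto simp: regular_dorder_def)
qed

lemma Reg_R_plus: "E \<in> Reg A \<Longrightarrow> E \<in> R_plus A"
proof -
  assume E: "E \<in> Reg A"
  then have d: "double_order A E" by (simp add: regular_dorder_def)
  then have "trans (fst E)" "trans (snd E)" by (auto simp: double_order_def strict_po_def)
  then have "E = join {E}" unfolding join_def by (simp add: trancl_id)
  then show ?thesis using d E unfolding R_plus_def semi_regular_def join_def
    by (intro CollectI conjI exI[of _ "{E}"]) auto
qed

lemma join_R_plus:
  assumes "S \<subseteq> Reg A" "finite S" "S \<noteq> {}" "0 \<le> e" "\<And>E. E \<in> S \<Longrightarrow> rz E c e"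
  shows "join S \<in> R_plus A"
proof -
  have rzj: "rz (join S) c e" using rz_join assms(4,5) by blast
  obtain E where E: "E \<in> S" using assms(3) by blast
  have dE: "double_order A E" using E assms(1) by (auto simp: regular_dorder_def)
  have subA: "(\<Union>E\<in>S. fst E) \<subseteq> A \<times> A" "(\<Union>E\<in>S. snd E) \<subseteq> A \<times> A"
    using assms(1) by (auto dest!: Reg_double double_order_sub)
  have spo1: "strict_po A (fst (join S))"
    unfolding strict_po_def
  proof (intro conjI allI)
    show "fst (join S) \<subseteq> A \<times> A" unfolding join_def using subA(1) by (simp add: trancl_subset_Sigma)
    show "trans (fst (join S))" unfolding join_def by simp
    fix a show "(a,a) \<notin> fst (join S)" using rzj assms(4) by (auto simp: rz_def gx_def)
  qed
  have spo2: "strict_po A (snd (join S))"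
    unfolding strict_po_def
  proof (intro conjI allI)
    show "snd (join S) \<subseteq> A \<times> A" unfolding join_def using subA(2) by (simp add: trancl_subset_Sigma)
    show "trans (snd (join S))" unfolding join_def by simp
    fix a show "(a,a) \<notin> snd (join S)" using rzj assms(4) by (auto simp: rz_def gy_def)
  qed
  have "double_order A (join S)"
    unfolding double_order_def
  proof (intro conjI spo1 spo2 ballI impI)
    fix a b assume "a \<in> A" "b \<in> A" "a \<noteq> b"
    then show "(a, b) \<in> fst (join S) \<or> (b, a) \<in> fst (join S) \<or> (a, b) \<in> snd (join S) \<or> (b, a) \<in> snd (join S)"
      using dE join_sub[OF E] unfolding double_order_def by blast
  qed
  then show ?thesis unfolding R_plus_def semi_regular_def
    using assms(1,2) by (intro CollectI conjI exI[of _ S]) (auto simp: join_def)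
qed



lemma card_le_mono_real:
  fixes X :: "real set"
  assumes "finite X" "v \<in> X" "v' \<in> X" "v < v'"
  shows "card {w\<in>X. w \<le> v} < card {w\<in>X. w \<le> v'}"
proof (rule psubset_card_mono)
  show "finite {w\<in>X. w \<le> v'}" using assms by auto
  have "v' \<in> {w\<in>X. w \<le> v'}" "v' \<notin> {w\<in>X. w \<le> v}" using assms by auto
  moreover have "{w\<in>X. w \<le> v} \<subseteq> {w\<in>X. w \<le> v'}" using assms by auto
  ultimately show "{w\<in>X. w \<le> v} \<subset> {w\<in>X. w \<le> v'}" by blast
qed

lemma FN_exists:
  assumes fA: "finite A" and c: "c \<in> OConf A"
  shows "\<exists>E\<in>Reg A. rz E c 0"
proof -
  define X where "X = (\<lambda>a. c a $ 1) ` A"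
  have fX: "finite X" using fA by (simp add: X_def)
  define k where "k v = card {w\<in>X. w \<le> v}" for v
  define h where "h a = k (c a $ 1)" for a
  have kmono: "v < v' \<Longrightarrow> v \<in> X \<Longrightarrow> v' \<in> X \<Longrightarrow> k v < k v'" for v v'
    unfolding k_def using card_le_mono_real[OF fX] by blast
  have kmono2: "v \<le> v' \<Longrightarrow> k v \<le> k v'" for v v'
    unfolding k_def using fX by (intro card_mono) auto
  have injk: "inj_on k X"
    by (metis kmono inj_onI linorder_neqE_linordered_idom order_less_irrefl)
  have ksub: "k ` X \<subseteq> {1..card X}"
  proof
    fix y assume "y \<in> k ` X"
    then obtain v where v: "v \<in> X" "y = k v" by auto
    have "1 \<le> k v" unfolding k_def using v fX
      by (metis (mono_tags, lifting) One_nat_def Suc_leI card_gt_0_iff empty_iff finite_subset mem_Collect_eq order_refl subsetI)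
    moreover have "k v \<le> card X" unfolding k_def using fX by (intro card_mono) auto
    ultimately show "y \<in> {1..card X}" using v by auto
  qed
  have kimg: "k ` X = {1..card X}"
    by (rule card_subset_eq) (use ksub card_image[OF injk] in auto)
  have himg: "h ` A = {1..card X}"
    using kimg unfolding h_def X_def by (simp add: image_image)
  have hlt: "a \<in> A \<Longrightarrow> b \<in> A \<Longrightarrow> h a < h b \<longleftrightarrow> c a $ 1 < c b $ 1" for a b
    unfolding h_def using kmono kmono2 X_def
    by (metis image_eqI leD linorder_le_less_linear)
  define E where "E = ({(a,b). a \<in> A \<and> b \<in> A \<and> c a $ 1 < c b $ 1},
                      {(a,b). a \<in> A \<and> b \<in> A \<and> c a $ 1 = c b $ 1 \<and> c a $ 2 < c b $ 2})"
  have sl: "semi_linear A (fst E)"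
    unfolding semi_linear_def E_def
    by (rule exI[of _ "card X"], rule exI[of _ h]) (use himg hlt in auto)
  have inj: "inj_on c A" using c by (simp add: OConf_def)
  have spo1: "strict_po A (fst E)"
    unfolding strict_po_def E_def by (auto simp: trans_def)
  have spo2: "strict_po A (snd E)"
    unfolding strict_po_def E_def by (auto simp: trans_def)
  have tot: "(a, b) \<in> fst E \<or> (b, a) \<in> fst E \<or> (a, b) \<in> snd E \<or> (b, a) \<in> snd E"
    if "a \<in> A" "b \<in> A" "a \<noteq> b" for a b
  proof -
    have "c a \<noteq> c b" using inj that by (auto dest: inj_onD)
    then have "c a $ 1 \<noteq> c b $ 1 \<or> c a $ 2 \<noteq> c b $ 2"
      by (simp add: vec_eq_iff forall_2)
    then show ?thesis using that unfolding E_def by auto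
  qed
  have reg: "regular_dorder A E"
    unfolding regular_dorder_def double_order_def
    using spo1 spo2 tot sl by (auto simp: E_def)
  have "rz E c 0" unfolding rz_def E_def gx_def gy_def by auto
  then show ?thesis using reg by blast
qed

definition Tp :: "'a set \<Rightarrow> ('a \<Rightarrow> real^2) \<Rightarrow> real" where
  "Tp A c = min (1/2) (Max ((\<lambda>E. mg E c) ` Reg A))"

lemma Reg_fin: "finite A \<Longrightarrow> E \<in> Reg A \<Longrightarrow> fin_do E"
  using double_order_fin Reg_double by blast

lemma Reg_ne: "finite A \<Longrightarrow> c \<in> OConf A \<Longrightarrow> Reg A \<noteq> {}"
  using FN_exists by blast

lemma Tp_pos:
  assumes "finite A" "c \<in> OConf A" shows "0 < Tp A c"
proof -
  obtain E where E: "E \<in> Reg A" "rz E c 0" using FN_exists[OF assms] by blast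
  have "0 < mg E c" using mg_gt[OF Reg_fin[OF assms(1) E(1)], of 0] E(2) by simp
  moreover have "mg E c \<le> Max ((\<lambda>E. mg E c) ` Reg A)"
    using E(1) finite_Reg[OF assms(1)] by (intro Max_ge) auto
  ultimately show ?thesis unfolding Tp_def by simp
qed

lemma Tp_le: "Tp A c \<le> 1/2" by (simp add: Tp_def)

lemma Tp_exists:
  assumes "finite A" "c \<in> OConf A" "e < Tp A c"
  shows "\<exists>E\<in>Reg A. e < mg E c"
proof -
  have "e < Max ((\<lambda>E. mg E c) ` Reg A)" using assms(3) by (simp add: Tp_def)
  then show ?thesis
    using finite_Reg[OF assms(1)] Reg_ne[OF assms(1,2)] by (subst (asm) Max_gr_iff) auto
qed

lemma Tp_cont: "finite A \<Longrightarrow> Reg A \<noteq> {} \<Longrightarrow> continuous_on S (Tp A)"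
  unfolding Tp_def
  by (intro continuous_intros continuous_on_Max_fam finite_Reg mg_cont Reg_fin) auto

definition Qs :: "'a set \<Rightarrow> real \<Rightarrow> ('a \<Rightarrow> real^2) \<Rightarrow> 'a dorder set" where
  "Qs A e c = {E \<in> Reg A. e < mg E c}"

definition Mx :: "'a set \<Rightarrow> real \<Rightarrow> ('a \<Rightarrow> real^2) \<Rightarrow> 'a dorder" where
  "Mx A e c = join (Qs A e c)"

lemma Qs_rz: "finite A \<Longrightarrow> e < 1 \<Longrightarrow> E \<in> Qs A e c \<Longrightarrow> rz E c e"
  unfolding Qs_def using mg_gt Reg_fin by blast

lemma Mx_props:
  assumes "finite A" "c \<in> OConf A" "0 \<le> e" "e < Tp A c"
  shows "Mx A e c \<in> R_plus A" "rz (Mx A e c) c e"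
proof -
  have e1: "e < 1" using assms(4) Tp_le[of A c] by linarith
  have ne: "Qs A e c \<noteq> {}" using Tp_exists[OF assms(1,2,4)] by (auto simp: Qs_def)
  have fin: "finite (Qs A e c)" using finite_Reg[OF assms(1)] by (simp add: Qs_def)
  show "Mx A e c \<in> R_plus A" unfolding Mx_def
    by (rule join_R_plus[OF _ fin ne assms(3)]) (auto simp: Qs_def intro: Qs_rz[OF assms(1) e1])
  show "rz (Mx A e c) c e" unfolding Mx_def
    by (rule rz_join[OF assms(3)]) (rule Qs_rz[OF assms(1) e1])
qed

lemma Mx_anti:
  assumes "e1 \<le> e2" shows "dorder_le (Mx A e1 c) (Mx A e2 c)"
proof -
  have "Qs A e2 c \<subseteq> Qs A e1 c" using assms by (auto simp: Qs_def)
  then show ?thesis unfolding Mx_def dorder_le_def using join_mono by blast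
qed



definition Fam :: "'a set \<Rightarrow> 'a dorder \<Rightarrow> 'a dorder set set" where
  "Fam A D = {S. S \<subseteq> Reg A \<and> S \<noteq> {} \<and> dorder_le (join S) D}"

definition phi :: "'a set \<Rightarrow> 'a dorder \<Rightarrow> ('a \<Rightarrow> real^2) \<Rightarrow> real" where
  "phi A D c = Max (insert 0 ((\<lambda>S. Min ((\<lambda>E. mg E c) ` S)) ` Fam A D))"

definition php :: "'a set \<Rightarrow> 'a dorder \<Rightarrow> ('a \<Rightarrow> real^2) \<Rightarrow> real" where
  "php A D c = min (phi A D c) (Tp A c)"

definition Up :: "'a set \<Rightarrow> 'a dorder \<Rightarrow> 'a dorder set" where
  "Up A D = {D' \<in> R_plus A. dorder_le D' D \<and> D' \<noteq> D}"

definition wt :: "'a set \<Rightarrow> 'a dorder \<Rightarrow> ('a \<Rightarrow> real^2) \<Rightarrow> real" where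
  "wt A D c = php A D c - Max (insert 0 ((\<lambda>D'. php A D' c) ` Up A D))"

definition fmap :: "'a set \<Rightarrow> ('a \<Rightarrow> real^2) \<Rightarrow> 'a dorder \<Rightarrow> real" where
  "fmap A c = (\<lambda>D. if D \<in> R_plus A then wt A D c / (\<Sum>D'\<in>R_plus A. wt A D' c) else 0)"

lemma finite_Fam: "finite A \<Longrightarrow> finite (Fam A D)"
  by (rule finite_subset[of _ "Pow (Reg A)"]) (auto simp: Fam_def finite_Reg)

lemma finite_Up: "finite A \<Longrightarrow> finite (Up A D)"
  by (rule finite_subset[of _ "R_plus A"]) (auto simp: Up_def finite_R_plus)

lemma phi_nonneg: "finite A \<Longrightarrow> 0 \<le> phi A D c"
  unfolding phi_def by (rule Max_ge) (auto simp: finite_Fam)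

lemma phi_iff:
  assumes fA: "finite A" and c: "c \<in> OConf A" and e: "0 \<le> e" "e < Tp A c"
  shows "e < phi A D c \<longleftrightarrow> dorder_le (Mx A e c) D"
proof
  assume "e < phi A D c"
  then have "\<exists>x\<in>insert 0 ((\<lambda>S. Min ((\<lambda>E. mg E c) ` S)) ` Fam A D). e < x"
    unfolding phi_def using finite_Fam[OF fA] by (subst (asm) Max_gr_iff) auto
  then obtain S where S: "S \<in> Fam A D" "e < Min ((\<lambda>E. mg E c) ` S)" using e by auto
  have fS: "finite S" using S(1) finite_Reg[OF fA] by (auto simp: Fam_def intro: finite_subset)
  have "\<forall>E\<in>S. e < mg E c" using S fS by (auto simp: Fam_def)
  then have "S \<subseteq> Qs A e c" using S(1) by (auto simp: Qs_def Fam_def)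
  then have "dorder_le (Mx A e c) (join S)" unfolding Mx_def dorder_le_def using join_mono by blast
  then show "dorder_le (Mx A e c) D" using S(1) by (auto simp: Fam_def dorder_le_def)
next
  assume le: "dorder_le (Mx A e c) D"
  have ne: "Qs A e c \<noteq> {}" using Tp_exists[OF fA c e(2)] by (auto simp: Qs_def)
  have fin: "finite (Qs A e c)" using finite_Reg[OF fA] by (simp add: Qs_def)
  have inF: "Qs A e c \<in> Fam A D" using ne le by (auto simp: Fam_def Qs_def Mx_def)
  have "e < Min ((\<lambda>E. mg E c) ` Qs A e c)" using ne fin by (auto simp: Qs_def)
  also have "\<dots> \<le> phi A D c" unfolding phi_def
    using inF finite_Fam[OF fA] by (intro Max_ge) auto
  finally show "e < phi A D c" .
qed

lemma phi_anti:
  assumes "finite A" "dorder_le D' D"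
  shows "phi A D' c \<le> phi A D c"
proof -
  have "Fam A D' \<subseteq> Fam A D" using assms(2) by (auto simp: Fam_def dorder_le_def)
  then show ?thesis unfolding phi_def using finite_Fam[OF assms(1)]
    by (intro Max_mono) auto
qed

lemma wt_nonneg:
  assumes "finite A" "c \<in> OConf A"
  shows "0 \<le> wt A D c"
proof -
  have "0 \<le> php A D c" using phi_nonneg[OF assms(1)] Tp_pos[OF assms] by (simp add: php_def)
  moreover have "php A D' c \<le> php A D c" if "D' \<in> Up A D" for D'
  proof -
    have "phi A D' c \<le> phi A D c" using that phi_anti[OF assms(1), of D' D c] by (simp add: Up_def)
    then show ?thesis unfolding php_def by (meson min.mono order_refl)
  qed
  ultimately show ?thesis unfolding wt_def using finite_Up[OF assms(1)] by simp
qed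

lemma wt_pos_Mx:
  assumes fA: "finite A" and c: "c \<in> OConf A" and D: "D \<in> R_plus A" and w: "0 < wt A D c"
  shows "\<exists>e. 0 \<le> e \<and> e < Tp A c \<and> Mx A e c = D"
proof -
  define e where "e = Max (insert 0 ((\<lambda>D'. php A D' c) ` Up A D))"
  have e0: "0 \<le> e" unfolding e_def using finite_Up[OF fA] by simp
  have "e < php A D c" using w by (simp add: wt_def e_def)
  then have eT: "e < Tp A c" and eph: "e < phi A D c" by (auto simp: php_def)
  have le: "dorder_le (Mx A e c) D" using phi_iff[OF fA c e0 eT] eph by simp
  have MP: "Mx A e c \<in> R_plus A" using Mx_props[OF fA c e0 eT] by simp
  have "Mx A e c = D"
  proof (rule ccontr)
    assume ne: "Mx A e c \<noteq> D"
    then have "Mx A e c \<in> Up A D" using le MP by (simp add: Up_def)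
    then have "php A (Mx A e c) c \<le> e" unfolding e_def using finite_Up[OF fA] by simp
    moreover have "e < phi A (Mx A e c) c" using phi_iff[OF fA c e0 eT] by (simp add: dorder_le_def)
    ultimately show False using eT by (simp add: php_def)
  qed
  then show ?thesis using e0 eT by blast
qed

lemma wt_sum_pos:
  assumes fA: "finite A" and c: "c \<in> OConf A"
  shows "0 < (\<Sum>D\<in>R_plus A. wt A D c)"
proof -
  have T0: "0 < Tp A c" using Tp_pos[OF fA c] .
  define Ds where "Ds = Mx A 0 c"
  have DsP: "Ds \<in> R_plus A" using Mx_props[OF fA c order_refl T0] by (simp add: Ds_def)
  have p1: "0 < phi A Ds c" using phi_iff[OF fA c order_refl T0] by (simp add: Ds_def dorder_le_def)
  have p2: "php A D' c \<le> 0" if "D' \<in> Up A Ds" for D'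
  proof (rule ccontr)
    assume "\<not> php A D' c \<le> 0"
    then have "0 < phi A D' c" by (simp add: php_def)
    then have "dorder_le Ds D'" using phi_iff[OF fA c order_refl T0] by (simp add: Ds_def)
    then show False using that by (auto simp: Up_def dorder_le_def prod_eq_iff)
  qed
  have "Max (insert 0 ((\<lambda>D'. php A D' c) ` Up A Ds)) = 0"
    using p2 finite_Up[OF fA] by (intro antisym) auto
  then have wpos: "0 < wt A Ds c" using p1 T0 by (simp add: wt_def php_def)
  have "wt A Ds c \<le> (\<Sum>D\<in>R_plus A. wt A D c)"
    by (rule member_le_sum[OF DsP]) (use wt_nonneg[OF fA c] finite_R_plus[OF fA] in auto)
  then show ?thesis using wpos by simp
qed

lemma fmap_support:
  assumes fA: "finite A" and c: "c \<in> OConf A" and pos: "0 < fmap A c D"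
  shows "\<exists>e. 0 \<le> e \<and> e < Tp A c \<and> Mx A e c = D"
proof -
  have D: "D \<in> R_plus A" using pos by (simp add: fmap_def split: if_splits)
  have "0 < wt A D c" using pos wt_sum_pos[OF fA c] D by (simp add: fmap_def zero_less_divide_iff)
  then show ?thesis using wt_pos_Mx[OF fA c D] by blast
qed

lemma fmap_rz:
  assumes fA: "finite A" and c: "c \<in> OConf A" and pos: "0 < fmap A c D"
  shows "rz D c 0" "D \<in> R_plus A"
proof -
  obtain e where e: "0 \<le> e" "e < Tp A c" "Mx A e c = D" using fmap_support[OF assms] by blast
  have "rz D c e" using Mx_props(2)[OF fA c e(1,2)] e(3) by simp
  then show "rz D c 0" using e(1) unfolding rz_def by fastforce
  show "D \<in> R_plus A" using Mx_props(1)[OF fA c e(1,2)] e(3) by simp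
qed

lemma fmap_real:
  assumes fA: "finite A" and c: "c \<in> OConf A"
  shows "fmap A c \<in> realization (R_plus A) dorder_le"
  unfolding realization_def
proof (intro CollectI conjI allI impI)
  have s: "0 < (\<Sum>D\<in>R_plus A. wt A D c)" using wt_sum_pos[OF fA c] .
  fix x
  show "0 \<le> fmap A c x" unfolding fmap_def using s wt_nonneg[OF fA c] by simp
  show "x \<notin> R_plus A \<Longrightarrow> fmap A c x = 0" unfolding fmap_def by simp
next
  have s: "0 < (\<Sum>D\<in>R_plus A. wt A D c)" using wt_sum_pos[OF fA c] .
  show "sum (fmap A c) (R_plus A) = 1" unfolding fmap_def using s
    by (simp add: sum_divide_distrib[symmetric])
next
  fix x y assume "0 < fmap A c x \<and> 0 < fmap A c y"
  then obtain e1 e2 where "Mx A e1 c = x" "Mx A e2 c = y"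
    using fmap_support[OF fA c] by meson
  then show "dorder_le x y \<or> dorder_le y x"
    using Mx_anti[of e1 e2 A c] Mx_anti[of e2 e1 A c] by (cases "e1 \<le> e2") auto
qed



lemma continuous_on_Max_ins0:
  fixes f :: "'i \<Rightarrow> 'x::topological_space \<Rightarrow> real"
  assumes "finite I" "\<And>i. i \<in> I \<Longrightarrow> continuous_on S (f i)"
  shows "continuous_on S (\<lambda>x. Max (insert 0 ((\<lambda>i. f i x) ` I)))"
proof (cases "I = {}")
  case True then show ?thesis by simp
next
  case False
  have "continuous_on S (\<lambda>x. max 0 (Max ((\<lambda>i. f i x) ` I)))"
    by (intro continuous_intros continuous_on_Max_fam assms False)
  moreover have "max 0 (Max ((\<lambda>i. f i x) ` I)) = Max (insert 0 ((\<lambda>i. f i x) ` I))" for x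
    using assms(1) False by (simp add: Max_insert)
  ultimately show ?thesis by simp
qed

lemma OConf_Reg_ne: "finite A \<Longrightarrow> OConf A \<noteq> {} \<Longrightarrow> Reg A \<noteq> {}"
  using Reg_ne by blast

lemma Tp_cont_OConf: "finite A \<Longrightarrow> continuous_on (OConf A) (Tp A)"
proof (cases "OConf A = {}")
  case False
  assume "finite A"
  then show ?thesis using Tp_cont OConf_Reg_ne False by blast
qed simp

lemma phi_cont: "finite A \<Longrightarrow> continuous_on S (phi A D)"
proof -
  assume fA: "finite A"
  have "continuous_on S (\<lambda>c. Max (insert 0 ((\<lambda>X. Min ((\<lambda>E. mg E c) ` X)) ` Fam A D)))"
  proof (rule continuous_on_Max_ins0[OF finite_Fam[OF fA]])
    fix X assume X: "X \<in> Fam A D"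
    then have "finite X" "X \<noteq> {}" "X \<subseteq> Reg A"
      using finite_Reg[OF fA] by (auto simp: Fam_def intro: finite_subset)
    then show "continuous_on S (\<lambda>c. Min ((\<lambda>E. mg E c) ` X))"
      by (intro continuous_on_Min_fam mg_cont Reg_fin[OF fA]) auto
  qed
  then show ?thesis unfolding phi_def[abs_def] .
qed

lemma php_cont: "finite A \<Longrightarrow> continuous_on (OConf A) (php A D)"
  unfolding php_def[abs_def] by (intro continuous_intros phi_cont Tp_cont_OConf)

lemma wt_cont: "finite A \<Longrightarrow> continuous_on (OConf A) (wt A D)"
  unfolding wt_def[abs_def]
  by (intro continuous_intros php_cont continuous_on_Max_ins0 finite_Up)

lemma fmap_cont:
  assumes fA: "finite A" shows "continuous_on (OConf A) (fmap A)"
proof (rule continuous_on_coordinatewise_then_product)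
  fix D
  show "continuous_on (OConf A) (\<lambda>c. fmap A c D)"
  proof (cases "D \<in> R_plus A")
    case True
    have "continuous_on (OConf A) (\<lambda>c. wt A D c / (\<Sum>D'\<in>R_plus A. wt A D' c))"
      using wt_sum_pos[OF fA]
      by (intro continuous_intros wt_cont fA) (auto simp: less_le)
    then show ?thesis using True by (simp add: fmap_def)
  next
    case False then show ?thesis by (simp add: fmap_def)
  qed
qed

definition pv :: "'a dorder \<Rightarrow> 'a \<Rightarrow> real^2" where
  "pv D a = (\<chi> i. if i = 1 then real (card {b. (b,a) \<in> fst D}) else real (card {b. (b,a) \<in> snd D}))"

definition gmap :: "'a set \<Rightarrow> ('a dorder \<Rightarrow> real) \<Rightarrow> 'a \<Rightarrow> real^2" where
  "gmap A t = (\<lambda>a. \<Sum>D\<in>R_plus A. t D *\<^sub>R pv D a)"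

lemma card_pred_lt:
  assumes "finite A" "strict_po A r" "(a,b) \<in> r"
  shows "card {x. (x,a) \<in> r} < card {x. (x,b) \<in> r}"
proof (rule psubset_card_mono)
  have sub: "r \<subseteq> A \<times> A" "trans r" "(b,b) \<notin> r" using assms(2) by (auto simp: strict_po_def)
  show "finite {x. (x,b) \<in> r}" using sub(1) assms(1) by (auto intro: finite_subset)
  have "{x. (x,a) \<in> r} \<subseteq> {x. (x,b) \<in> r}" using sub(2) assms(3) by (auto dest: transD)
  moreover have "a \<in> {x. (x,b) \<in> r}" "a \<notin> {x. (x,a) \<in> r}"
    using assms(2,3) by (auto simp: strict_po_def)
  ultimately show "{x. (x,a) \<in> r} \<subset> {x. (x,b) \<in> r}" by blast
qed

lemma pv_gx: "finite A \<Longrightarrow> double_order A D \<Longrightarrow> (a,b) \<in> fst D \<Longrightarrow> 1 \<le> gx (pv D) a b"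
  using card_pred_lt[of A "fst D" a b] unfolding gx_def pv_def double_order_def by simp

lemma pv_gy: "finite A \<Longrightarrow> double_order A D \<Longrightarrow> (a,b) \<in> snd D \<Longrightarrow> 1 \<le> gy (pv D) a b"
  using card_pred_lt[of A "snd D" a b] unfolding gy_def pv_def double_order_def by simp

lemma pv_out: "double_order A D \<Longrightarrow> a \<notin> A \<Longrightarrow> pv D a = 0"
proof -
  assume "double_order A D" "a \<notin> A"
  then have "{b. (b,a) \<in> fst D} = {}" "{b. (b,a) \<in> snd D} = {}"
    using double_order_sub[of A D] by auto
  then show ?thesis unfolding pv_def by (simp add: vec_eq_iff)
qed

lemma gx_gmap: "gx (gmap A t) a b = (\<Sum>D\<in>R_plus A. t D * gx (pv D) a b)"
  unfolding gx_def gmap_def by (simp add: sum_subtractf[symmetric] right_diff_distrib)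

lemma gy_gmap: "gy (gmap A t) a b = (\<Sum>D\<in>R_plus A. t D * gy (pv D) a b)"
  unfolding gy_def gmap_def by (simp add: sum_subtractf[symmetric] right_diff_distrib)

lemma real_least:
  assumes fA: "finite A" and t: "t \<in> realization (R_plus A) dorder_le"
  shows "\<exists>M\<in>R_plus A. 0 < t M \<and> (\<forall>D. 0 < t D \<longrightarrow> dorder_le D M)"
proof -
  have tt: "\<forall>x. 0 \<le> t x" "\<forall>x. x \<notin> R_plus A \<longrightarrow> t x = 0" "sum t (R_plus A) = 1"
     "\<forall>x y. 0 < t x \<and> 0 < t y \<longrightarrow> dorder_le x y \<or> dorder_le y x"
    using t by (auto simp: realization_def)
  define K where "K = {D\<in>R_plus A. 0 < t D}"
  have "K \<noteq> {}"
  proof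
    assume "K = {}"
    then have "\<forall>D\<in>R_plus A. t D = 0" using tt(1) by (auto simp: K_def less_le)
    then show False using tt(3) by simp
  qed
  moreover have "finite K" using finite_R_plus[OF fA] by (simp add: K_def)
  ultimately obtain M where M: "M \<in> K" "\<forall>D\<in>K. fst M \<subseteq> fst D \<and> snd M \<subseteq> snd D"
    using finite_chain_least[of K] tt(4) by (auto simp: K_def)
  have "\<forall>D. 0 < t D \<longrightarrow> dorder_le D M"
  proof (intro allI impI)
    fix D assume "0 < t D"
    then have "D \<in> K" using tt(2) unfolding K_def by (metis (mono_tags, lifting) less_irrefl mem_Collect_eq)
    then show "dorder_le D M" using M(2) by (simp add: dorder_le_def)
  qed
  then show ?thesis using M(1) by (auto simp: K_def)
qed

lemma gmap_gap:
  assumes fA: "finite A" and t: "t \<in> realization (R_plus A) dorder_le"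
    and M: "\<forall>D. 0 < t D \<longrightarrow> dorder_le D M"
  shows "\<And>a b. (a,b) \<in> fst M \<Longrightarrow> 1 \<le> gx (gmap A t) a b"
    and "\<And>a b. (a,b) \<in> snd M \<Longrightarrow> 1 \<le> gy (gmap A t) a b"
proof -
  have tt: "\<And>x. 0 \<le> t x" "sum t (R_plus A) = 1"
    using t by (auto simp: realization_def)
  fix a b
  {
    assume ab: "(a,b) \<in> fst M"
    have "t D \<le> t D * gx (pv D) a b" if "D \<in> R_plus A" for D
    proof (cases "t D = 0")
      case False
      then have "0 < t D" using tt(1) by (simp add: less_le)
      then have "dorder_le D M" using M by blast
      then have "(a,b) \<in> fst D" using ab by (auto simp: dorder_le_def)
      then have "1 \<le> gx (pv D) a b" using pv_gx[OF fA R_plus_double[OF that]] by simp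
      then show ?thesis using tt(1)[of D] mult_left_mono[of 1 _ "t D"] by simp
    qed simp
    then have "sum t (R_plus A) \<le> (\<Sum>D\<in>R_plus A. t D * gx (pv D) a b)" by (rule sum_mono)
    then show "1 \<le> gx (gmap A t) a b" using tt(2) by (simp add: gx_gmap)
  }
  {
    assume ab: "(a,b) \<in> snd M"
    have "t D \<le> t D * gy (pv D) a b" if "D \<in> R_plus A" for D
    proof (cases "t D = 0")
      case False
      then have "0 < t D" using tt(1) by (simp add: less_le)
      then have "dorder_le D M" using M by blast
      then have "(a,b) \<in> snd D" using ab by (auto simp: dorder_le_def)
      then have "1 \<le> gy (pv D) a b" using pv_gy[OF fA R_plus_double[OF that]] by simp
      then show ?thesis using tt(1)[of D] mult_left_mono[of 1 _ "t D"] by simp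
    qed simp
    then have "sum t (R_plus A) \<le> (\<Sum>D\<in>R_plus A. t D * gy (pv D) a b)" by (rule sum_mono)
    then show "1 \<le> gy (gmap A t) a b" using tt(2) by (simp add: gy_gmap)
  }
qed

lemma rz_OConf:
  assumes "double_order A D" "rz D c 0" "\<forall>x. x \<notin> A \<longrightarrow> c x = 0"
  shows "c \<in> OConf A"
  unfolding OConf_def
proof (intro CollectI conjI inj_onI assms(3))
  fix a b assume ab: "a \<in> A" "b \<in> A" "c a = c b"
  show "a = b"
  proof (rule ccontr)
    assume "a \<noteq> b"
    then have "(a, b) \<in> fst D \<or> (b, a) \<in> fst D \<or> (a, b) \<in> snd D \<or> (b, a) \<in> snd D"
      using assms(1) ab by (auto simp: double_order_def)
    then show False using assms(2) ab(3) by (auto simp: rz_def gx_def gy_def)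
  qed
qed

lemma gmap_out:
  assumes a: "a \<notin> A" shows "gmap A t a = 0"
  unfolding gmap_def
proof (rule sum.neutral, rule ballI)
  fix D assume "D \<in> R_plus A"
  then show "t D *\<^sub>R pv D a = 0" using pv_out[OF R_plus_double a] by simp
qed

lemma gmap_OConf_M:
  assumes fA: "finite A" and t: "t \<in> realization (R_plus A) dorder_le"
  shows "\<exists>M\<in>R_plus A. 0 < t M \<and> (\<forall>D. 0 < t D \<longrightarrow> dorder_le D M) \<and> 1 \<le> mg M (gmap A t)
      \<and> rz M (gmap A t) 0"
proof -
  obtain M where M: "M \<in> R_plus A" "0 < t M" "\<forall>D. 0 < t D \<longrightarrow> dorder_le D M"
    using real_least[OF fA t] by blast
  note g = gmap_gap[OF fA t M(3)]
  have "1 \<le> mg M (gmap A t)"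
    by (rule mg_ge) (use g double_order_fin[OF fA R_plus_double[OF M(1)]] in auto)
  moreover have "rz M (gmap A t) 0" using g unfolding rz_def by fastforce
  ultimately show ?thesis using M by blast
qed

lemma gmap_OConf:
  assumes fA: "finite A" and t: "t \<in> realization (R_plus A) dorder_le"
  shows "gmap A t \<in> OConf A"
proof -
  obtain M where M: "M \<in> R_plus A" "rz M (gmap A t) 0" using gmap_OConf_M[OF fA t] by blast
  show ?thesis by (rule rz_OConf[OF R_plus_double[OF M(1)] M(2)]) (simp add: gmap_out)
qed

lemma gmap_cont: "continuous_on S (gmap A)"
  unfolding gmap_def[abs_def]
  by (intro continuous_on_coordinatewise_then_product continuous_intros
      continuous_on_product_then_coordinatewise[OF continuous_on_id])



lemma pos_or:
  fixes a b s :: real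
  assumes "0 \<le> a" "0 \<le> b" "0 < (1 - s) * a + s * b"
  shows "0 < a \<or> 0 < b"
proof (rule ccontr)
  assume "\<not> (0 < a \<or> 0 < b)"
  then have "a = 0" "b = 0" using assms(1,2) by auto
  then show False using assms(3) by simp
qed

lemma real_combo:
  assumes t: "t \<in> realization P le" and u: "u \<in> realization P le" and s: "s \<in> {0..1}"
    and ch: "\<And>x y. (0 < t x \<or> 0 < u x) \<Longrightarrow> (0 < t y \<or> 0 < u y) \<Longrightarrow> le x y \<or> le y x"
  shows "(\<lambda>x. (1 - s) *\<^sub>R t x + s *\<^sub>R u x) \<in> realization P le"
proof -
  have tt: "\<And>x. 0 \<le> t x" "\<And>x. x \<notin> P \<Longrightarrow> t x = 0" "sum t P = 1"
    using t by (auto simp: realization_def)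
  have uu: "\<And>x. 0 \<le> u x" "\<And>x. x \<notin> P \<Longrightarrow> u x = 0" "sum u P = 1"
    using u by (auto simp: realization_def)
  have s01: "0 \<le> s" "s \<le> 1" using s by auto
  show ?thesis unfolding realization_def
  proof (intro CollectI conjI allI impI)
    fix x
    show "0 \<le> (1 - s) *\<^sub>R t x + s *\<^sub>R u x" using tt(1)[of x] uu(1)[of x] s01 by simp
    show "x \<notin> P \<Longrightarrow> (1 - s) *\<^sub>R t x + s *\<^sub>R u x = 0" using tt(2) uu(2) by simp
  next
    show "(\<Sum>x\<in>P. (1 - s) *\<^sub>R t x + s *\<^sub>R u x) = 1"
      using tt(3) uu(3) by (simp add: sum.distrib sum_distrib_left[symmetric])
  next
    fix x y
    assume "0 < (1 - s) *\<^sub>R t x + s *\<^sub>R u x \<and> 0 < (1 - s) *\<^sub>R t y + s *\<^sub>R u y"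
    then have "(0 < t x \<or> 0 < u x)" "(0 < t y \<or> 0 < u y)"
      using pos_or[OF tt(1)[of x] uu(1)[of x], of s] pos_or[OF tt(1)[of y] uu(1)[of y], of s] by auto
    then show "le x y \<or> le y x" by (rule ch)
  qed
qed

definition rho :: "'a set \<Rightarrow> 'a dorder \<Rightarrow> ('a \<Rightarrow> real^2) \<Rightarrow> real" where
  "rho A D c = max 0 (mg D c - Tp A c)"

definition rden :: "'a set \<Rightarrow> ('a dorder \<Rightarrow> real) \<Rightarrow> real" where
  "rden A t = (\<Sum>D'\<in>R_plus A. t D' * rho A D' (gmap A t))"

definition rmap :: "'a set \<Rightarrow> ('a dorder \<Rightarrow> real) \<Rightarrow> 'a dorder \<Rightarrow> real" where
  "rmap A t = (\<lambda>D. if D \<in> R_plus A then t D * rho A D (gmap A t) / rden A t else 0)"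

lemma rden_pos:
  assumes fA: "finite A" and t: "t \<in> realization (R_plus A) dorder_le"
  shows "0 < rden A t"
proof -
  obtain M where M: "M \<in> R_plus A" "0 < t M" "1 \<le> mg M (gmap A t)"
    using gmap_OConf_M[OF fA t] by blast
  have tt: "\<And>x. 0 \<le> t x" using t by (auto simp: realization_def)
  have "1/2 \<le> rho A M (gmap A t)" using M(3) Tp_le[of A "gmap A t"] by (simp add: rho_def)
  then have "0 < t M * rho A M (gmap A t)" using M(2) by simp
  also have "\<dots> \<le> rden A t" unfolding rden_def
    by (rule member_le_sum[OF M(1)]) (auto simp: tt rho_def finite_R_plus[OF fA])
  finally show ?thesis .
qed

lemma rmap_pos:
  assumes fA: "finite A" and t: "t \<in> realization (R_plus A) dorder_le" and p: "0 < rmap A t D"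
  shows "D \<in> R_plus A" "0 < t D" "Tp A (gmap A t) < mg D (gmap A t)"
proof -
  have r: "0 < rden A t" using rden_pos[OF fA t] .
  have tt: "\<And>x. 0 \<le> t x" using t by (auto simp: realization_def)
  show D: "D \<in> R_plus A" using p by (simp add: rmap_def split: if_splits)
  have "0 < t D * rho A D (gmap A t)" using p r D by (simp add: rmap_def zero_less_divide_iff)
  then have "0 < t D" "0 < rho A D (gmap A t)"
    using tt[of D] by (auto simp: rho_def zero_less_mult_iff)
  then show "0 < t D" "Tp A (gmap A t) < mg D (gmap A t)" by (auto simp: rho_def)
qed

lemma rmap_real:
  assumes fA: "finite A" and t: "t \<in> realization (R_plus A) dorder_le"
  shows "rmap A t \<in> realization (R_plus A) dorder_le"
proof -
  have r: "0 < rden A t" using rden_pos[OF fA t] .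
  have tt: "\<And>x. 0 \<le> t x" "\<And>x y. 0 < t x \<Longrightarrow> 0 < t y \<Longrightarrow> dorder_le x y \<or> dorder_le y x"
    using t unfolding realization_def mem_Collect_eq by blast+
  show ?thesis unfolding realization_def
  proof (intro CollectI conjI allI impI)
    fix x
    show "0 \<le> rmap A t x" unfolding rmap_def using r tt(1)[of x] by (simp add: rho_def)
    show "x \<notin> R_plus A \<Longrightarrow> rmap A t x = 0" by (simp add: rmap_def)
  next
    show "sum (rmap A t) (R_plus A) = 1" unfolding rmap_def using r
      by (simp add: sum_divide_distrib[symmetric] rden_def)
  next
    fix x y assume "0 < rmap A t x \<and> 0 < rmap A t y"
    then show "dorder_le x y \<or> dorder_le y x" using rmap_pos(2)[OF fA t] tt(2) by meson
  qed
qed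

lemma chain2:
  assumes fA: "finite A" and c: "c \<in> OConf A" and D: "D \<in> R_plus A" and m: "Tp A c < mg D c"
    and E: "0 < fmap A c E"
  shows "dorder_le E D"
proof -
  obtain e where e: "0 \<le> e" "e < Tp A c" "Mx A e c = E" using fmap_support[OF fA c E] by blast
  obtain F where F: "finite F" "\<forall>E\<in>F. regular_dorder A E"
      "D = ((\<Union>E\<in>F. fst E)\<^sup>+, (\<Union>E\<in>F. snd E)\<^sup>+)"
    using D by (auto simp: R_plus_def semi_regular_def)
  have Dj: "D = join F" using F(3) by (simp add: join_def)
  have finD: "fin_do D" using double_order_fin[OF fA R_plus_double[OF D]] .
  have "F \<subseteq> Qs A e c"
  proof
    fix E' assume E': "E' \<in> F"
    have "fst E' \<subseteq> fst D" "snd E' \<subseteq> snd D" using join_sub[OF E'] Dj by auto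
    then have "mg D c \<le> mg E' c" by (rule mg_mono[OF finD])
    then show "E' \<in> Qs A e c" using E' F(2) e(2) m by (simp add: Qs_def)
  qed
  then have "dorder_le (Mx A e c) (join F)" unfolding Mx_def dorder_le_def using join_mono by blast
  then show ?thesis using Dj e(3) by simp
qed

lemma H1_mem:
  assumes fA: "finite A" and c: "c \<in> OConf A" and s: "s \<in> {0..1}"
  shows "(\<lambda>i. (1 - s) *\<^sub>R c i + s *\<^sub>R gmap A (fmap A c) i) \<in> OConf A"
proof -
  have t: "fmap A c \<in> realization (R_plus A) dorder_le" using fmap_real[OF fA c] .
  obtain M where M: "M \<in> R_plus A" "0 < fmap A c M" "rz M (gmap A (fmap A c)) 0"
    using gmap_OConf_M[OF fA t] by blast
  have rc: "rz M c 0" using fmap_rz(1)[OF fA c M(2)] .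
  have s01: "0 \<le> s" "s \<le> 1" using s by auto
  have pos: "0 < (1 - s) * x + s * y" if "0 < x" "0 < y" for x y :: real
  proof (cases "s = 0")
    case False
    then have "0 < s" using s01 by simp
    then show ?thesis using that s01 by (smt (verit) mult_pos_pos mult_nonneg_nonneg)
  qed (use that in simp)
  let ?h = "(\<lambda>i. (1 - s) *\<^sub>R c i + s *\<^sub>R gmap A (fmap A c) i)"
  have ex: "gx ?h a b = (1 - s) * gx c a b + s * gx (gmap A (fmap A c)) a b" for a b
    by (simp add: gx_def algebra_simps)
  have ey: "gy ?h a b = (1 - s) * gy c a b + s * gy (gmap A (fmap A c)) a b" for a b
    by (simp add: gy_def algebra_simps)
  have "rz M ?h 0"
    unfolding rz_def
  proof (intro conjI ballI; clarify)
    fix a b assume "(a,b) \<in> fst M"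
    then have "0 < gx c a b" "0 < gx (gmap A (fmap A c)) a b" using rc M(3) by (auto simp: rz_def)
    then show "0 < gx ?h a b" unfolding ex by (rule pos)
  next
    fix a b assume "(a,b) \<in> snd M"
    then have "0 < gy c a b" "0 < gy (gmap A (fmap A c)) a b" using rc M(3) by (auto simp: rz_def)
    then show "0 < gy ?h a b" unfolding ey by (rule pos)
  qed
  moreover have "\<forall>x. x \<notin> A \<longrightarrow> ?h x = 0"
    using c gmap_out[of _ A] by (simp add: OConf_def)
  ultimately show ?thesis by (rule rz_OConf[OF R_plus_double[OF M(1)]])
qed



lemma real_pos_chain:
  "t \<in> realization P le \<Longrightarrow> 0 < t x \<Longrightarrow> 0 < t y \<Longrightarrow> le x y \<or> le y x"
  unfolding realization_def mem_Collect_eq by blast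

lemma H2_mem:
  assumes fA: "finite A" and t: "t \<in> realization (R_plus A) dorder_le" and s: "s \<in> {0..1}"
  shows "(\<lambda>D. (1 - s) *\<^sub>R t D + s *\<^sub>R rmap A t D) \<in> realization (R_plus A) dorder_le"
  by (rule real_combo[OF t rmap_real[OF fA t] s])
     (meson real_pos_chain[OF t] rmap_pos(2)[OF fA t])

lemma H3_mem:
  assumes fA: "finite A" and t: "t \<in> realization (R_plus A) dorder_le" and s: "s \<in> {0..1}"
  shows "(\<lambda>D. (1 - s) *\<^sub>R rmap A t D + s *\<^sub>R fmap A (gmap A t) D) \<in> realization (R_plus A) dorder_le"
proof -
  have g: "gmap A t \<in> OConf A" using gmap_OConf[OF fA t] .
  have r: "rmap A t \<in> realization (R_plus A) dorder_le" using rmap_real[OF fA t] .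
  have f: "fmap A (gmap A t) \<in> realization (R_plus A) dorder_le" using fmap_real[OF fA g] .
  have mix: "dorder_le E D" if "0 < rmap A t D" "0 < fmap A (gmap A t) E" for D E
    using chain2[OF fA g rmap_pos(1)[OF fA t that(1)] rmap_pos(3)[OF fA t that(1)] that(2)] .
  show ?thesis
    by (rule real_combo[OF r f s]) (meson real_pos_chain[OF r] real_pos_chain[OF f] mix)
qed

lemma rho_cont:
  assumes fA: "finite A" and D: "D \<in> R_plus A"
  shows "continuous_on (realization (R_plus A) dorder_le) (\<lambda>t. rho A D (gmap A t))"
proof -
  have "continuous_on (realization (R_plus A) dorder_le) (\<lambda>t. Tp A (gmap A t))"
    by (rule continuous_on_compose2[OF Tp_cont_OConf[OF fA] gmap_cont]) (use gmap_OConf[OF fA] in auto)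
  moreover have "continuous_on (realization (R_plus A) dorder_le) (\<lambda>t. mg D (gmap A t))"
    by (rule continuous_on_compose2[OF mg_cont[OF double_order_fin[OF fA R_plus_double[OF D]]] gmap_cont]) auto
  ultimately show ?thesis unfolding rho_def by (intro continuous_intros)
qed

lemma proj_cont: "continuous_on S (\<lambda>t::'b \<Rightarrow> real. t D)"
  by (rule continuous_on_product_then_coordinatewise[OF continuous_on_id])

lemma rden_cont:
  assumes fA: "finite A"
  shows "continuous_on (realization (R_plus A) dorder_le) (rden A)"
  unfolding rden_def[abs_def]
  by (intro continuous_intros proj_cont rho_cont fA) auto

lemma rmap_cont:
  assumes fA: "finite A"
  shows "continuous_on (realization (R_plus A) dorder_le) (rmap A)"
proof (rule continuous_on_coordinatewise_then_product)
  fix D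
  show "continuous_on (realization (R_plus A) dorder_le) (\<lambda>t. rmap A t D)"
  proof (cases "D \<in> R_plus A")
    case True
    have "continuous_on (realization (R_plus A) dorder_le) (\<lambda>t. t D * rho A D (gmap A t) / rden A t)"
      using rden_pos[OF fA]
      by (intro continuous_intros proj_cont rho_cont rden_cont fA True) (auto simp: less_le)
    then show ?thesis using True by (simp add: rmap_def)
  next
    case False then show ?thesis by (simp add: rmap_def)
  qed
qed

lemma fg_cont:
  assumes fA: "finite A"
  shows "continuous_on (realization (R_plus A) dorder_le) (\<lambda>t. fmap A (gmap A t))"
  by (rule continuous_on_compose2[OF fmap_cont[OF fA] gmap_cont]) (use gmap_OConf[OF fA] in auto)

lemma gf_cont:
  assumes fA: "finite A"
  shows "continuous_on (OConf A) (\<lambda>c. gmap A (fmap A c))"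
  by (rule continuous_on_compose2[OF gmap_cont fmap_cont[OF fA]]) auto



lemma rel_act_comp: "rel_act (rel_act r a) b = rel_act r (a \<circ> b)"
  by (auto simp: rel_act_def)

lemma dorder_act_comp: "dorder_act (dorder_act D a) b = dorder_act D (a \<circ> b)"
  by (simp add: dorder_act_def rel_act_comp)

lemma rel_act_id: "rel_act r id = r"
  by (auto simp: rel_act_def)

lemma dorder_act_id: "dorder_act D id = D"
  by (simp add: dorder_act_def rel_act_id)

lemma act_inv1: "p permutes A \<Longrightarrow> dorder_act (dorder_act D (inv p)) p = D"
  by (simp add: dorder_act_comp permutes_inv_o dorder_act_id)

lemma act_inv2: "p permutes A \<Longrightarrow> dorder_act (dorder_act D p) (inv p) = D"
  by (simp add: dorder_act_comp permutes_inv_o dorder_act_id)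

lemma act_inj: "p permutes A \<Longrightarrow> dorder_act D p = dorder_act D' p \<Longrightarrow> D = D'"
  by (metis act_inv2)

lemma act_le: "dorder_le D D' \<Longrightarrow> dorder_le (dorder_act D p) (dorder_act D' p)"
  by (auto simp: dorder_le_def dorder_act_def rel_act_def)

lemma strict_po_act:
  assumes p: "p permutes A" and s: "strict_po A r"
  shows "strict_po A (rel_act r p)"
  using s unfolding strict_po_def rel_act_def
  by (auto simp: permutes_in_image[OF p] trans_def)

lemma double_order_act:
  assumes p: "p permutes A" and d: "double_order A D"
  shows "double_order A (dorder_act D p)"
proof -
  have ne: "p a \<noteq> p b" if "a \<noteq> b" for a b using permutes_inj[OF p] that by (auto dest: injD)
  have s1: "strict_po A (fst (dorder_act D p))" unfolding dorder_act_def fst_conv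
    by (rule strict_po_act[OF p]) (use d in \<open>simp add: double_order_def\<close>)
  have s2: "strict_po A (snd (dorder_act D p))" unfolding dorder_act_def snd_conv
    by (rule strict_po_act[OF p]) (use d in \<open>simp add: double_order_def\<close>)
  show ?thesis unfolding double_order_def
  proof (intro conjI s1 s2 ballI impI)
    fix a b assume ab: "a \<in> A" "b \<in> A" "a \<noteq> b"
    then have "p a \<in> A" "p b \<in> A" "p a \<noteq> p b" using ne permutes_in_image[OF p] by auto
    then show "(a, b) \<in> fst (dorder_act D p) \<or> (b, a) \<in> fst (dorder_act D p) \<or>
          (a, b) \<in> snd (dorder_act D p) \<or> (b, a) \<in> snd (dorder_act D p)"
      using d unfolding double_order_def dorder_act_def rel_act_def by auto
  qed
qed

lemma semi_linear_act:
  assumes p: "p permutes A" and s: "semi_linear A r"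
  shows "semi_linear A (rel_act r p)"
proof -
  obtain l :: nat and h :: "'a \<Rightarrow> nat" where h: "h ` A = {1..l}" "r = {(a, b). a \<in> A \<and> b \<in> A \<and> h a < h b}"
    using s unfolding semi_linear_def by blast
  have "(h \<circ> p) ` A = {1..l}" by (metis image_comp permutes_image[OF p] h(1))
  moreover have "rel_act r p = {(a, b). a \<in> A \<and> b \<in> A \<and> (h \<circ> p) a < (h \<circ> p) b}"
    using h(2) by (auto simp: rel_act_def permutes_in_image[OF p])
  ultimately show ?thesis unfolding semi_linear_def by blast
qed

lemma regular_act:
  assumes p: "p permutes A" and r: "regular_dorder A E"
  shows "regular_dorder A (dorder_act E p)"
  using r double_order_act[OF p] semi_linear_act[OF p]
  unfolding regular_dorder_def by (auto simp: dorder_act_def rel_act_def)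

lemma trancl_act1: "(a,b) \<in> (rel_act r p)\<^sup>+ \<Longrightarrow> (p a, p b) \<in> r\<^sup>+"
  by (induction rule: trancl_induct) (auto simp: rel_act_def intro: trancl_into_trancl)

lemma trancl_act2:
  assumes p: "p permutes A" shows "(x,y) \<in> r\<^sup>+ \<Longrightarrow> (inv p x, inv p y) \<in> (rel_act r p)\<^sup>+"
proof (induction rule: trancl_induct)
  case (base y) then show ?case by (auto simp: rel_act_def permutes_inverses[OF p])
next
  case (step y z)
  then have "(inv p y, inv p z) \<in> rel_act r p" by (auto simp: rel_act_def permutes_inverses[OF p])
  then show ?case using step by (meson trancl_into_trancl)
qed

lemma trancl_act:
  assumes p: "p permutes A" shows "rel_act (r\<^sup>+) p = (rel_act r p)\<^sup>+"
proof (intro set_eqI iffI; clarify)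
  fix a b assume "(a,b) \<in> rel_act (r\<^sup>+) p"
  then have "(p a, p b) \<in> r\<^sup>+" by (simp add: rel_act_def)
  then show "(a,b) \<in> (rel_act r p)\<^sup>+" using trancl_act2[OF p] by (metis permutes_inverses(2)[OF p])
next
  fix a b assume "(a,b) \<in> (rel_act r p)\<^sup>+"
  then show "(a,b) \<in> rel_act (r\<^sup>+) p" using trancl_act1 by (simp add: rel_act_def)
qed

lemma join_act:
  assumes p: "p permutes A" shows "join ((\<lambda>E. dorder_act E p) ` S) = dorder_act (join S) p"
proof -
  have "(\<Union>E\<in>S. rel_act (fst E) p) = rel_act (\<Union>E\<in>S. fst E) p"
       "(\<Union>E\<in>S. rel_act (snd E) p) = rel_act (\<Union>E\<in>S. snd E) p"
    by (auto simp: rel_act_def)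
  then show ?thesis
    unfolding join_def dorder_act_def by (simp add: trancl_act[OF p])
qed

lemma R_plus_act:
  assumes p: "p permutes A" and D: "D \<in> R_plus A"
  shows "dorder_act D p \<in> R_plus A"
proof -
  obtain F where F: "finite F" "\<forall>E\<in>F. regular_dorder A E" "D = join F"
    using D by (auto simp: R_plus_def semi_regular_def join_def)
  have "dorder_act D p = join ((\<lambda>E. dorder_act E p) ` F)" using F(3) join_act[OF p] by simp
  then show ?thesis using F double_order_act[OF p R_plus_double[OF D]] regular_act[OF p]
    unfolding R_plus_def semi_regular_def join_def
    by (intro CollectI conjI exI[of _ "(\<lambda>E. dorder_act E p) ` F"]) auto
qed

lemma bij_act:
  assumes p: "p permutes A" shows "bij_betw (\<lambda>D. dorder_act D p) (R_plus A) (R_plus A)"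
proof (rule bij_betw_imageI)
  show "inj_on (\<lambda>D. dorder_act D p) (R_plus A)" by (meson act_inj[OF p] inj_onI)
  show "(\<lambda>D. dorder_act D p) ` R_plus A = R_plus A"
  proof
    show "(\<lambda>D. dorder_act D p) ` R_plus A \<subseteq> R_plus A" using R_plus_act[OF p] by auto
    show "R_plus A \<subseteq> (\<lambda>D. dorder_act D p) ` R_plus A"
    proof
      fix D assume "D \<in> R_plus A"
      then have "dorder_act D (inv p) \<in> R_plus A" using R_plus_act[OF permutes_inv[OF p]] by simp
      then show "D \<in> (\<lambda>D. dorder_act D p) ` R_plus A" using act_inv1[OF p, of D] by force
    qed
  qed
qed

lemma R_plus_act_iff:
  assumes p: "p permutes A" shows "dorder_act D p \<in> R_plus A \<longleftrightarrow> D \<in> R_plus A"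
proof
  assume "dorder_act D p \<in> R_plus A"
  then have "dorder_act (dorder_act D p) (inv p) \<in> R_plus A" by (rule R_plus_act[OF permutes_inv[OF p]])
  then show "D \<in> R_plus A" by (simp only: act_inv2[OF p])
qed (rule R_plus_act[OF p])

lemma gx_comp: "gx (c \<circ> p) a b = gx c (p a) (p b)" by (simp add: gx_def)
lemma gy_comp: "gy (c \<circ> p) a b = gy c (p a) (p b)" by (simp add: gy_def)

lemma mg_act:
  assumes p: "p permutes A" shows "mg (dorder_act D p) (c \<circ> p) = mg D c"
proof -
  have 1: "(\<lambda>(a,b). gx (c \<circ> p) a b) ` rel_act (fst D) p = (\<lambda>(a,b). gx c a b) ` fst D"
  proof (intro set_eqI iffI)
    fix v assume "v \<in> (\<lambda>(a,b). gx (c \<circ> p) a b) ` rel_act (fst D) p"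
    then show "v \<in> (\<lambda>(a,b). gx c a b) ` fst D" by (auto simp: rel_act_def gx_comp)
  next
    fix v assume "v \<in> (\<lambda>(a,b). gx c a b) ` fst D"
    then obtain a b where "(a,b) \<in> fst D" "v = gx c a b" by auto
    then show "v \<in> (\<lambda>(a,b). gx (c \<circ> p) a b) ` rel_act (fst D) p"
      by (intro image_eqI[of _ _ "(inv p a, inv p b)"]) (auto simp: rel_act_def gx_comp permutes_inverses[OF p])
  qed
  have 2: "(\<lambda>(a,b). gy (c \<circ> p) a b) ` rel_act (snd D) p = (\<lambda>(a,b). gy c a b) ` snd D"
  proof (intro set_eqI iffI)
    fix v assume "v \<in> (\<lambda>(a,b). gy (c \<circ> p) a b) ` rel_act (snd D) p"
    then show "v \<in> (\<lambda>(a,b). gy c a b) ` snd D" by (auto simp: rel_act_def gy_comp)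
  next
    fix v assume "v \<in> (\<lambda>(a,b). gy c a b) ` snd D"
    then obtain a b where "(a,b) \<in> snd D" "v = gy c a b" by auto
    then show "v \<in> (\<lambda>(a,b). gy (c \<circ> p) a b) ` rel_act (snd D) p"
      by (intro image_eqI[of _ _ "(inv p a, inv p b)"]) (auto simp: rel_act_def gy_comp permutes_inverses[OF p])
  qed
  show ?thesis unfolding mg_def dorder_act_def fst_conv snd_conv 1 2 ..
qed

lemma comp_inv_cancel: "p permutes A \<Longrightarrow> (c \<circ> p) \<circ> inv p = c"
  by (simp add: o_assoc[symmetric] permutes_inv_o)

lemma Reg_act: "p permutes A \<Longrightarrow> E \<in> Reg A \<Longrightarrow> dorder_act E p \<in> Reg A"
  using regular_act by blast

lemma Tp_le_act:
  assumes p: "p permutes A" and fA: "finite A"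
  shows "Tp A c \<le> Tp A (c \<circ> p)"
proof (cases "Reg A = {}")
  case True then show ?thesis unfolding Tp_def True by simp
next
  case False
  have "(\<lambda>E. mg E c) ` Reg A \<subseteq> (\<lambda>E. mg E (c \<circ> p)) ` Reg A"
  proof
    fix v assume "v \<in> (\<lambda>E. mg E c) ` Reg A"
    then obtain E where "E \<in> Reg A" "v = mg E c" by auto
    then show "v \<in> (\<lambda>E. mg E (c \<circ> p)) ` Reg A"
      using mg_act[OF p, of E c] Reg_act[OF p] by (metis (no_types, lifting) image_eqI)
  qed
  then have "Max ((\<lambda>E. mg E c) ` Reg A) \<le> Max ((\<lambda>E. mg E (c \<circ> p)) ` Reg A)"
    using False finite_Reg[OF fA] by (intro Max_mono) auto
  then show ?thesis unfolding Tp_def by (meson min.mono order_refl)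
qed

lemma Tp_act:
  assumes p: "p permutes A" and fA: "finite A"
  shows "Tp A (c \<circ> p) = Tp A c"
  using Tp_le_act[OF p fA, of c] Tp_le_act[OF permutes_inv[OF p] fA, of "c \<circ> p"]
  by (simp add: comp_inv_cancel[OF p])

lemma phi_le_act:
  assumes p: "p permutes A" and fA: "finite A"
  shows "phi A D c \<le> phi A (dorder_act D p) (c \<circ> p)"
proof -
  have "insert 0 ((\<lambda>S. Min ((\<lambda>E. mg E c) ` S)) ` Fam A D)
        \<subseteq> insert 0 ((\<lambda>S. Min ((\<lambda>E. mg E (c \<circ> p)) ` S)) ` Fam A (dorder_act D p))"
  proof (rule insert_mono, rule subsetI)
    fix v assume "v \<in> (\<lambda>S. Min ((\<lambda>E. mg E c) ` S)) ` Fam A D"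
    then obtain S where S: "S \<in> Fam A D" "v = Min ((\<lambda>E. mg E c) ` S)" by auto
    let ?S = "(\<lambda>E. dorder_act E p) ` S"
    have "?S \<in> Fam A (dorder_act D p)"
      using S(1) Reg_act[OF p] act_le[of "join S" D p] join_act[OF p, of S]
      by (auto simp: Fam_def)
    moreover have "(\<lambda>E. mg E (c \<circ> p)) ` ?S = (\<lambda>E. mg E c) ` S"
      by (auto simp: image_image mg_act[OF p])
    ultimately show "v \<in> (\<lambda>S. Min ((\<lambda>E. mg E (c \<circ> p)) ` S)) ` Fam A (dorder_act D p)"
      using S(2) by (metis (no_types, lifting) image_eqI)
  qed
  then show ?thesis unfolding phi_def
    by (intro Max_mono) (auto simp: finite_Fam[OF fA])
qed

lemma phi_act:
  assumes p: "p permutes A" and fA: "finite A"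
  shows "phi A (dorder_act D p) (c \<circ> p) = phi A D c"
  using phi_le_act[OF p fA, of D c] phi_le_act[OF permutes_inv[OF p] fA, of "dorder_act D p" "c \<circ> p"]
  by (simp add: comp_inv_cancel[OF p] act_inv2[OF p])

lemma php_act:
  assumes p: "p permutes A" and fA: "finite A"
  shows "php A (dorder_act D p) (c \<circ> p) = php A D c"
  by (simp add: php_def phi_act[OF p fA] Tp_act[OF p fA])

lemma wtmax_le_act:
  assumes p: "p permutes A" and fA: "finite A"
  shows "Max (insert 0 ((\<lambda>D'. php A D' c) ` Up A D))
       \<le> Max (insert 0 ((\<lambda>D'. php A D' (c \<circ> p)) ` Up A (dorder_act D p)))"
proof -
  have "insert 0 ((\<lambda>D'. php A D' c) ` Up A D) \<subseteq> insert 0 ((\<lambda>D'. php A D' (c \<circ> p)) ` Up A (dorder_act D p))"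
  proof (rule insert_mono, rule subsetI)
    fix v assume "v \<in> (\<lambda>D'. php A D' c) ` Up A D"
    then obtain D' where D': "D' \<in> Up A D" "v = php A D' c" by auto
    have D'': "D' \<in> R_plus A" "dorder_le D' D" "D' \<noteq> D" using D'(1) by (auto simp: Up_def)
    have "dorder_act D' p \<noteq> dorder_act D p" using act_inj[OF p] D''(3) by metis
    then have "dorder_act D' p \<in> Up A (dorder_act D p)"
      using R_plus_act[OF p D''(1)] act_le[OF D''(2)] by (simp add: Up_def)
    then show "v \<in> (\<lambda>D'. php A D' (c \<circ> p)) ` Up A (dorder_act D p)"
      using D'(2) php_act[OF p fA, of D' c] by (metis (no_types, lifting) image_eqI)
  qed
  then show ?thesis by (intro Max_mono) (auto simp: finite_Up[OF fA])
qed

lemma wt_act: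
  assumes p: "p permutes A" and fA: "finite A"
  shows "wt A (dorder_act D p) (c \<circ> p) = wt A D c"
  using wtmax_le_act[OF p fA, of c D] wtmax_le_act[OF permutes_inv[OF p] fA, of "c \<circ> p" "dorder_act D p"]
  by (simp add: wt_def php_act[OF p fA] comp_inv_cancel[OF p] act_inv2[OF p])

lemma wt_sum_act:
  assumes p: "p permutes A" and fA: "finite A"
  shows "(\<Sum>D\<in>R_plus A. wt A D (c \<circ> p)) = (\<Sum>D\<in>R_plus A. wt A D c)"
proof -
  have "(\<Sum>D\<in>R_plus A. wt A D (c \<circ> p)) = (\<Sum>D\<in>R_plus A. wt A (dorder_act D p) (c \<circ> p))"
    using sum.reindex_bij_betw[OF bij_act[OF p], of "\<lambda>D. wt A D (c \<circ> p)"] by simp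
  also have "\<dots> = (\<Sum>D\<in>R_plus A. wt A D c)" by (simp add: wt_act[OF p fA])
  finally show ?thesis .
qed

lemma fmap_equiv:
  assumes p: "p permutes A" and fA: "finite A"
  shows "fmap A (conf_act c p) = realization_act (fmap A c) p"
proof
  fix E
  define D where "D = dorder_act E (inv p)"
  have E: "E = dorder_act D p" using act_inv1[OF p] by (simp add: D_def)
  show "fmap A (conf_act c p) E = realization_act (fmap A c) p E"
    unfolding realization_act_def conf_act_def D_def[symmetric] E
    by (simp add: fmap_def R_plus_act_iff[OF p] wt_act[OF p fA] wt_sum_act[OF p fA] act_inv2[OF p])
qed



lemma pv_act:
  assumes p: "p permutes A" shows "pv (dorder_act D p) a = pv D (p a)"
proof -
  have 1: "{b. (b, a) \<in> rel_act r p} = p -` {b. (b, p a) \<in> r}" for r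
    by (auto simp: rel_act_def)
  have 2: "card (p -` X) = card X" for X :: "'a set"
    by (rule card_vimage_inj[OF permutes_inj[OF p]]) (use permutes_surj[OF p] in auto)
  show ?thesis unfolding pv_def dorder_act_def fst_conv snd_conv 1 2 ..
qed

lemma gmap_equiv:
  assumes p: "p permutes A"
  shows "gmap A (realization_act t p) = conf_act (gmap A t) p"
proof
  fix a
  have "gmap A (realization_act t p) a = (\<Sum>D\<in>R_plus A. t (dorder_act D (inv p)) *\<^sub>R pv D a)"
    by (simp add: gmap_def realization_act_def)
  also have "\<dots> = (\<Sum>D\<in>R_plus A. t (dorder_act (dorder_act D p) (inv p)) *\<^sub>R pv (dorder_act D p) a)"
    using sum.reindex_bij_betw[OF bij_act[OF p], of "\<lambda>D. t (dorder_act D (inv p)) *\<^sub>R pv D a"] by simp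
  also have "\<dots> = (\<Sum>D\<in>R_plus A. t D *\<^sub>R pv D (p a))"
    by (simp add: act_inv2[OF p] pv_act[OF p])
  also have "\<dots> = conf_act (gmap A t) p a" by (simp add: conf_act_def gmap_def)
  finally show "gmap A (realization_act t p) a = conf_act (gmap A t) p a" .
qed

lemma rho_act:
  assumes p: "p permutes A" and fA: "finite A"
  shows "rho A (dorder_act D p) (c \<circ> p) = rho A D c"
  by (simp add: rho_def mg_act[OF p] Tp_act[OF p fA])

lemma rden_equiv:
  assumes p: "p permutes A" and fA: "finite A"
  shows "rden A (realization_act t p) = rden A t"
proof -
  have g: "gmap A (realization_act t p) = gmap A t \<circ> p"
    using gmap_equiv[OF p] by (simp add: conf_act_def)
  have "rden A (realization_act t p) = (\<Sum>D\<in>R_plus A. realization_act t p D * rho A D (gmap A t \<circ> p))"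
    by (simp only: rden_def g)
  also have "\<dots> = (\<Sum>D\<in>R_plus A. t (dorder_act D (inv p)) * rho A D (gmap A t \<circ> p))"
    by (simp add: realization_act_def)
  also have "\<dots> = (\<Sum>D\<in>R_plus A. t (dorder_act (dorder_act D p) (inv p)) * rho A (dorder_act D p) (gmap A t \<circ> p))"
    using sum.reindex_bij_betw[OF bij_act[OF p], of "\<lambda>D. t (dorder_act D (inv p)) * rho A D (gmap A t \<circ> p)"] by simp
  also have "\<dots> = rden A t" by (simp add: act_inv2[OF p] rho_act[OF p fA] rden_def)
  finally show ?thesis .
qed

lemma rmap_equiv:
  assumes p: "p permutes A" and fA: "finite A"
  shows "rmap A (realization_act t p) = realization_act (rmap A t) p"
proof
  fix E
  define D where "D = dorder_act E (inv p)"
  have E: "E = dorder_act D p" using act_inv1[OF p] by (simp add: D_def)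
  have g: "gmap A (realization_act t p) = gmap A t \<circ> p"
    using gmap_equiv[OF p] by (simp add: conf_act_def)
  have "rmap A (realization_act t p) E = (if E \<in> R_plus A then realization_act t p E * rho A E (gmap A t \<circ> p) / rden A t else 0)"
    by (simp only: rmap_def g rden_equiv[OF p fA])
  also have "\<dots> = realization_act (rmap A t) p E"
    unfolding realization_act_def D_def[symmetric] E
    by (simp add: rmap_def R_plus_act_iff[OF p] rho_act[OF p fA] act_inv2[OF p])
  finally show "rmap A (realization_act t p) E = realization_act (rmap A t) p E" .
qed

lemma equiv_line_real:
  assumes "equivariant G realization_act realization_act X p" "equivariant G realization_act realization_act X q"
  shows "equivariant G realization_act realization_act X (\<lambda>x. \<lambda>i. (1 - s) *\<^sub>R p x i + s *\<^sub>R q x i)"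
  using assms unfolding equivariant_def by (simp add: realization_act_def)

lemma equiv_line_conf:
  assumes "equivariant G conf_act conf_act X p" "equivariant G conf_act conf_act X q"
  shows "equivariant G conf_act conf_act X (\<lambda>x. \<lambda>i. (1 - s) *\<^sub>R p x i + s *\<^sub>R q x i)"
  using assms unfolding equivariant_def by (simp add: conf_act_def o_def)

theorem proposition5p7:
  fixes A :: "'a set"
  assumes "finite A"
  shows "G_homotopy_equivalent {\<sigma>. \<sigma> permutes A} realization_act conf_act
           (top_of_set (realization (R_plus A) dorder_le)) (top_of_set (OConf A))"
proof -
  note fA = assms
  let ?G = "{\<sigma>. \<sigma> permutes A}"
  let ?R = "realization (R_plus A) dorder_le"
  let ?X = "top_of_set ?R"
  let ?Y = "top_of_set (OConf A)"
  have c1: "continuous_map ?X ?Y (gmap A)"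
    using gmap_cont gmap_OConf[OF fA] by auto
  have c2: "continuous_map ?Y ?X (fmap A)"
    using fmap_cont[OF fA] fmap_real[OF fA] by auto
  have e1: "equivariant ?G realization_act conf_act ?X (gmap A)"
    unfolding equivariant_def using gmap_equiv by blast
  have e2: "equivariant ?G conf_act realization_act ?Y (fmap A)"
    unfolding equivariant_def using fmap_equiv[OF _ fA] by blast
  have eid: "equivariant G act act X id" for G act X by (simp add: equivariant_def)
  have er: "equivariant ?G realization_act realization_act ?X (rmap A)"
    unfolding equivariant_def using rmap_equiv[OF _ fA] by blast
  have efg: "equivariant ?G realization_act realization_act ?X (fmap A \<circ> gmap A)"
    unfolding equivariant_def by (simp add: gmap_equiv fmap_equiv[OF _ fA])
  have egf: "equivariant ?G conf_act conf_act ?Y (gmap A \<circ> fmap A)"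
    unfolding equivariant_def by (simp add: gmap_equiv fmap_equiv[OF _ fA])
  have h1: "homotopic_with (equivariant ?G realization_act realization_act ?X) ?X ?X id (rmap A)"
  proof (rule line_homotopy)
    show "continuous_on ?R id" by (simp add: continuous_on_id')
    show "continuous_on ?R (rmap A)" by (rule rmap_cont[OF fA])
    fix x and s :: real assume "x \<in> ?R" "s \<in> {0..1}"
    then show "(\<lambda>i. (1 - s) *\<^sub>R id x i + s *\<^sub>R rmap A x i) \<in> ?R" using H2_mem[OF fA] by simp
  next
    fix s :: real
    show "equivariant ?G realization_act realization_act ?X (\<lambda>x i. (1 - s) *\<^sub>R id x i + s *\<^sub>R rmap A x i)"
      by (rule equiv_line_real[OF eid er])
  qed
  have h2: "homotopic_with (equivariant ?G realization_act realization_act ?X) ?X ?X (rmap A) (fmap A \<circ> gmap A)"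
  proof (rule line_homotopy)
    show "continuous_on ?R (rmap A)" by (rule rmap_cont[OF fA])
    show "continuous_on ?R (fmap A \<circ> gmap A)" using fg_cont[OF fA] by (simp add: o_def)
    fix x and s :: real assume "x \<in> ?R" "s \<in> {0..1}"
    then show "(\<lambda>i. (1 - s) *\<^sub>R rmap A x i + s *\<^sub>R (fmap A \<circ> gmap A) x i) \<in> ?R" using H3_mem[OF fA] by simp
  next
    fix s :: real
    show "equivariant ?G realization_act realization_act ?X (\<lambda>x i. (1 - s) *\<^sub>R rmap A x i + s *\<^sub>R (fmap A \<circ> gmap A) x i)"
      by (rule equiv_line_real[OF er efg])
  qed
  have hX: "homotopic_with (equivariant ?G realization_act realization_act ?X) ?X ?X (fmap A \<circ> gmap A) id"
    using homotopic_with_trans[OF h1 h2] homotopic_with_sym by blast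
  have h3: "homotopic_with (equivariant ?G conf_act conf_act ?Y) ?Y ?Y id (gmap A \<circ> fmap A)"
  proof (rule line_homotopy)
    show "continuous_on (OConf A) id" by (simp add: continuous_on_id')
    show "continuous_on (OConf A) (gmap A \<circ> fmap A)" using gf_cont[OF fA] by (simp add: o_def)
    fix x and s :: real assume "x \<in> OConf A" "s \<in> {0..1}"
    then show "(\<lambda>i. (1 - s) *\<^sub>R id x i + s *\<^sub>R (gmap A \<circ> fmap A) x i) \<in> OConf A" using H1_mem[OF fA] by simp
  next
    fix s :: real
    show "equivariant ?G conf_act conf_act ?Y (\<lambda>x i. (1 - s) *\<^sub>R id x i + s *\<^sub>R (gmap A \<circ> fmap A) x i)"
      by (rule equiv_line_conf[OF eid egf])
  qed
  have hY: "homotopic_with (equivariant ?G conf_act conf_act ?Y) ?Y ?Y (gmap A \<circ> fmap A) id"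
    using h3 homotopic_with_sym by blast
  show ?thesis unfolding G_homotopy_equivalent_def
    using c1 c2 e1 e2 hX hY by blast
qed


end
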